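(* Let $f\in\mathcal{H}^2_{\omega}$. For an integer $k\geq1$ and $\lambda\in\mathbb{C}$ put $g_{k,\lambda}(z)=z^k+\lambda$. The following are equivalent: (i) $f$ is $\mathcal{H}^2_{\omega}$-inner; (ii) $\|f\|=1$ and for every integer $k\geq 1$ at least one of the following holds: (C1) there is a constant $C_k$ with $\|fg_{k,\lambda}\|^2\leq C_k+|\lambda|^2$ for all $\lambda\in\mathbb{C}$; (C2) there is a constant $D_k$ with $\|fg_{k,\lambda}\|^2\geq D_k+|\lambda|^2$ for all $\lambda\in\mathbb{C}$; (iii) $\|f\|=1$ and $|p(0)|\leq\|pf\|$ for every polynomial $p\in\mathbb{C}[z]$.
   Context: Let $\omega=\{\omega_n\}_{n\geq 0}$ be a sequence of positive reals with $\omega_0=1$ and $\lim_{n\to\infty}\omega_{n+1}/\omega_n=1$. $\mathcal{H}^2_{\omega}$ is the Hilbert space of power series $f(z)=\sum_{n\ge0}a_nz^n$ with $\|f\|^2=\sum_{n\geq0}\omega_n|a_n|^2<\infty$ and inner product $\langle f,g\rangle=\sum_n\omega_na_n\overline{b_n}$ for $g=\sum b_nz^n$; its elements are holomorphic on the unit disk $\mathbb{D}$. A function $f\in\mathcal{H}^2_{\omega}$ is $\mathcal{H}^2_{\omega}$-inner if $\|f\|=1$ and $\langle z^mf,f\rangle=0$ for all integers $m\geq1$. *)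

theory Defs
  imports "HOL-Analysis.Analysis" "HOL-Computational_Algebra.Polynomial_FPS"
begin

definition admissible_weight :: "(nat \<Rightarrow> real) \<Rightarrow> bool" where
  "admissible_weight \<omega> \<longleftrightarrow> (\<forall>n. \<omega> n > 0) \<and> \<omega> 0 = 1 \<and>
     ((\<lambda>n. \<omega> (Suc n) / \<omega> n) \<longlonglongrightarrow> 1)"

definition in_H2w :: "(nat \<Rightarrow> real) \<Rightarrow> complex fps \<Rightarrow> bool" where
  "in_H2w \<omega> f \<longleftrightarrow> summable (\<lambda>n. \<omega> n * (cmod (fps_nth f n))\<^sup>2)"

definition H2w_norm :: "(nat \<Rightarrow> real) \<Rightarrow> complex fps \<Rightarrow> real" where
  "H2w_norm \<omega> f = sqrt (\<Sum>n. \<omega> n * (cmod (fps_nth f n))\<^sup>2)"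

definition H2w_inner :: "(nat \<Rightarrow> real) \<Rightarrow> complex fps \<Rightarrow> complex fps \<Rightarrow> complex" where
  "H2w_inner \<omega> f g = (\<Sum>n. complex_of_real (\<omega> n) * (fps_nth f n) * cnj (fps_nth g n))"

definition H2w_inner_fn :: "(nat \<Rightarrow> real) \<Rightarrow> complex fps \<Rightarrow> bool" where
  "H2w_inner_fn \<omega> f \<longleftrightarrow> in_H2w \<omega> f \<and> H2w_norm \<omega> f = 1 \<and>
     (\<forall>m::nat. m \<ge> 1 \<longrightarrow> H2w_inner \<omega> (fps_X ^ m * f) f = 0)"

definition g_fn :: "nat \<Rightarrow> complex \<Rightarrow> complex fps" where
  "g_fn k c = fps_X ^ k + fps_const c"

end

theory Submission
  imports Defs
begin

lemma weight_bound:
  assumes "admissible_weight \<omega>"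
  shows "\<exists>M>0. \<forall>n. \<omega> (Suc n) \<le> M * \<omega> n"
proof -
  have pos: "\<And>n. \<omega> n > 0" and lim: "(\<lambda>n. \<omega> (Suc n) / \<omega> n) \<longlonglongrightarrow> 1"
    using assms unfolding admissible_weight_def by auto
  have "eventually (\<lambda>n. \<omega> (Suc n) / \<omega> n < 2) sequentially"
    using order_tendstoD(2)[OF lim] by simp
  then obtain N where N: "\<And>n. n \<ge> N \<Longrightarrow> \<omega> (Suc n) / \<omega> n < 2"
    unfolding eventually_sequentially by blast
  define M where "M = 2 + (\<Sum>n<N. \<omega> (Suc n) / \<omega> n)"
  have nn: "\<And>n. \<omega> (Suc n) / \<omega> n \<ge> 0" using pos by (simp add: less_imp_le)
  have Mpos: "M > 0" unfolding M_def using nn by (simp add: add_pos_nonneg sum_nonneg)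
  have "\<omega> (Suc n) / \<omega> n \<le> M" for n
  proof (cases "n < N")
    case True
    have "\<omega> (Suc n) / \<omega> n \<le> (\<Sum>n<N. \<omega> (Suc n) / \<omega> n)"
      using True nn by (intro member_le_sum) auto
    then show ?thesis unfolding M_def by simp
  next
    case False
    then have "\<omega> (Suc n) / \<omega> n < 2" using N by simp
    moreover have "(\<Sum>n<N. \<omega> (Suc n) / \<omega> n) \<ge> 0" using nn by (simp add: sum_nonneg)
    ultimately show ?thesis unfolding M_def by simp
  qed
  then have "\<omega> (Suc n) \<le> M * \<omega> n" for n
    using pos[of n] by (simp add: divide_le_eq)
  then show ?thesis using Mpos by blast
qed

lemma in_H2w_X:
  assumes "admissible_weight \<omega>" "in_H2w \<omega> u"
  shows "in_H2w \<omega> (fps_X * u)"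
proof -
  obtain M where M: "M > 0" "\<And>n. \<omega> (Suc n) \<le> M * \<omega> n" using weight_bound[OF assms(1)] by blast
  have s: "summable (\<lambda>n. M * (\<omega> n * (cmod (fps_nth u n))\<^sup>2))"
    using assms(2) unfolding in_H2w_def by (intro summable_mult)
  have "summable (\<lambda>n. \<omega> (Suc n) * (cmod (fps_nth (fps_X * u) (Suc n)))\<^sup>2)"
  proof (rule summable_comparison_test[OF _ s])
    show "\<exists>N. \<forall>n\<ge>N. norm (\<omega> (Suc n) * (cmod (fps_nth (fps_X * u) (Suc n)))\<^sup>2) \<le> M * (\<omega> n * (cmod (fps_nth u n))\<^sup>2)"
    proof (intro exI allI impI)
      fix n
      have "\<omega> (Suc n) > 0" using assms(1) unfolding admissible_weight_def by auto
      moreover have "\<omega> (Suc n) * (cmod (fps_nth u n))\<^sup>2 \<le> M * \<omega> n * (cmod (fps_nth u n))\<^sup>2"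
        using M(2)[of n] by (simp add: mult_right_mono)
      ultimately show "norm (\<omega> (Suc n) * (cmod (fps_nth (fps_X * u) (Suc n)))\<^sup>2) \<le> M * (\<omega> n * (cmod (fps_nth u n))\<^sup>2)"
        by (simp add: mult.assoc)
    qed
  qed
  then show ?thesis unfolding in_H2w_def using summable_Suc_iff by blast
qed

lemma in_H2w_Xpow:
  assumes "admissible_weight \<omega>" "in_H2w \<omega> u"
  shows "in_H2w \<omega> (fps_X ^ k * u)"
proof (induction k)
  case 0 then show ?case using assms by simp
next
  case (Suc k)
  have e: "fps_X ^ Suc k * u = fps_X * (fps_X ^ k * u)" by (metis power_Suc mult.assoc)
  show ?case unfolding e using in_H2w_X[OF assms(1) Suc] .
qed

lemma sq_add_le: "(cmod (a + b))\<^sup>2 \<le> 2 * (cmod a)\<^sup>2 + 2 * (cmod b)\<^sup>2"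
proof -
  have "cmod (a+b) \<le> cmod a + cmod b" by (rule norm_triangle_ineq)
  then have "(cmod (a+b))\<^sup>2 \<le> (cmod a + cmod b)\<^sup>2" by (simp add: power_mono)
  also have "\<dots> \<le> 2 * (cmod a)\<^sup>2 + 2 * (cmod b)\<^sup>2"
  proof -
    have e: "(cmod a + cmod b)\<^sup>2 = 2 * (cmod a)\<^sup>2 + 2 * (cmod b)\<^sup>2 - (cmod a - cmod b)\<^sup>2"
      by (simp add: power2_eq_square algebra_simps)
    have "(cmod a - cmod b)\<^sup>2 \<ge> 0" by simp
    then show ?thesis unfolding e by linarith
  qed
  finally show ?thesis .
qed

lemma in_H2w_lin:
  assumes "in_H2w \<omega> u" "in_H2w \<omega> v" "\<And>n. \<omega> n > 0"
  shows "in_H2w \<omega> (fps_const c * u + v)"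
proof -
  have s: "summable (\<lambda>n. 2 * (cmod c)\<^sup>2 * (\<omega> n * (cmod (fps_nth u n))\<^sup>2) + 2 * (\<omega> n * (cmod (fps_nth v n))\<^sup>2))"
    using assms unfolding in_H2w_def by (intro summable_add summable_mult)
  show ?thesis unfolding in_H2w_def
  proof (rule summable_comparison_test[OF _ s], intro exI allI impI)
    fix n
    have "(cmod (c * fps_nth u n + fps_nth v n))\<^sup>2 \<le> 2 * (cmod (c * fps_nth u n))\<^sup>2 + 2 * (cmod (fps_nth v n))\<^sup>2"
      by (rule sq_add_le)
    then have "\<omega> n * (cmod (c * fps_nth u n + fps_nth v n))\<^sup>2 \<le> \<omega> n * (2 * (cmod (c * fps_nth u n))\<^sup>2 + 2 * (cmod (fps_nth v n))\<^sup>2)"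
      using assms(3)[of n] by (simp add: mult_left_mono)
    then show "norm (\<omega> n * (cmod (fps_nth (fps_const c * u + v) n))\<^sup>2) \<le> 2 * (cmod c)\<^sup>2 * (\<omega> n * (cmod (fps_nth u n))\<^sup>2) + 2 * (\<omega> n * (cmod (fps_nth v n))\<^sup>2)"
      using assms(3)[of n] by (simp add: norm_mult power_mult_distrib algebra_simps)
  qed
qed

lemma inner_summable:
  assumes "in_H2w \<omega> u" "in_H2w \<omega> v" "\<And>n. \<omega> n > 0"
  shows "summable (\<lambda>n. complex_of_real (\<omega> n) * fps_nth u n * cnj (fps_nth v n))"
proof -
  have s: "summable (\<lambda>n. (\<omega> n * (cmod (fps_nth u n))\<^sup>2) + (\<omega> n * (cmod (fps_nth v n))\<^sup>2))"
    using assms unfolding in_H2w_def by (intro summable_add)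
  have "summable (\<lambda>n. norm (complex_of_real (\<omega> n) * fps_nth u n * cnj (fps_nth v n)))"
  proof (rule summable_comparison_test[OF _ s], intro exI allI impI)
    fix n
    have a: "cmod (fps_nth u n) * cmod (fps_nth v n) \<le> (cmod (fps_nth u n))\<^sup>2 + (cmod (fps_nth v n))\<^sup>2"
    proof -
      have e: "2 * (cmod (fps_nth u n) * cmod (fps_nth v n)) = (cmod (fps_nth u n))\<^sup>2 + (cmod (fps_nth v n))\<^sup>2 - (cmod (fps_nth u n) - cmod (fps_nth v n))\<^sup>2"
        by (simp add: power2_eq_square algebra_simps)
      have "(cmod (fps_nth u n) - cmod (fps_nth v n))\<^sup>2 \<ge> 0" by simp
      moreover have "cmod (fps_nth u n) * cmod (fps_nth v n) \<ge> 0" by simp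
      ultimately show ?thesis using e by linarith
    qed
    have "\<omega> n * (cmod (fps_nth u n) * cmod (fps_nth v n)) \<le> \<omega> n * ((cmod (fps_nth u n))\<^sup>2 + (cmod (fps_nth v n))\<^sup>2)"
      using a assms(3)[of n] by (simp add: mult_left_mono)
    then show "norm (norm (complex_of_real (\<omega> n) * fps_nth u n * cnj (fps_nth v n))) \<le> (\<omega> n * (cmod (fps_nth u n))\<^sup>2) + (\<omega> n * (cmod (fps_nth v n))\<^sup>2)"
      using assms(3)[of n] by (simp add: norm_mult algebra_simps)
  qed
  then show ?thesis by (rule summable_norm_cancel)
qed

lemma term_id: "(cmod (c*a+b))\<^sup>2 = (cmod c)\<^sup>2*(cmod a)\<^sup>2 + (cmod b)\<^sup>2 + 2*Re(c*a*cnj b)"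
  unfolding cmod_power2 by (simp add: power2_eq_square algebra_simps)

lemma norm_sq:
  assumes "in_H2w \<omega> u" "\<And>n. \<omega> n > 0"
  shows "(H2w_norm \<omega> u)\<^sup>2 = (\<Sum>n. \<omega> n * (cmod (fps_nth u n))\<^sup>2)"
proof -
  have "(\<Sum>n. \<omega> n * (cmod (fps_nth u n))\<^sup>2) \<ge> 0"
    using assms unfolding in_H2w_def by (intro suminf_nonneg) (auto simp: less_imp_le)
  then show ?thesis unfolding H2w_norm_def by simp
qed

lemma expand:
  assumes u: "in_H2w \<omega> u" and v: "in_H2w \<omega> v" and pos: "\<And>n. \<omega> n > 0"
  shows "(H2w_norm \<omega> (fps_const c * u + v))\<^sup>2 = (cmod c)\<^sup>2 * (H2w_norm \<omega> u)\<^sup>2 + (H2w_norm \<omega> v)\<^sup>2 + 2 * Re (c * H2w_inner \<omega> u v)"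
proof -
  define g where "g n = complex_of_real (\<omega> n) * fps_nth u n * cnj (fps_nth v n)" for n
  have A: "(\<lambda>n. \<omega> n * (cmod (fps_nth u n))\<^sup>2) sums (H2w_norm \<omega> u)\<^sup>2"
    using u pos by (simp add: norm_sq in_H2w_def summable_sums)
  have B: "(\<lambda>n. \<omega> n * (cmod (fps_nth v n))\<^sup>2) sums (H2w_norm \<omega> v)\<^sup>2"
    using v pos by (simp add: norm_sq in_H2w_def summable_sums)
  have G: "g sums H2w_inner \<omega> u v"
    using inner_summable[OF u v pos] unfolding g_def H2w_inner_def by (simp add: summable_sums)
  have G2: "(\<lambda>n. Re (c * g n)) sums Re (c * H2w_inner \<omega> u v)"
    using sums_Re[OF sums_mult[OF G, of c]] .
  have S: "(\<lambda>n. (cmod c)\<^sup>2 * (\<omega> n * (cmod (fps_nth u n))\<^sup>2) + \<omega> n * (cmod (fps_nth v n))\<^sup>2 + 2 * Re (c * g n))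
      sums ((cmod c)\<^sup>2 * (H2w_norm \<omega> u)\<^sup>2 + (H2w_norm \<omega> v)\<^sup>2 + 2 * Re (c * H2w_inner \<omega> u v))"
    by (intro sums_add sums_mult A B G2)
  have eq: "\<omega> n * (cmod (fps_nth (fps_const c * u + v) n))\<^sup>2 = (cmod c)\<^sup>2 * (\<omega> n * (cmod (fps_nth u n))\<^sup>2) + \<omega> n * (cmod (fps_nth v n))\<^sup>2 + 2 * Re (c * g n)" for n
  proof -
    have cg: "c * g n = complex_of_real (\<omega> n) * (c * fps_nth u n * cnj (fps_nth v n))"
      unfolding g_def by (simp add: ac_simps)
    have r: "Re (c * g n) = \<omega> n * Re (c * fps_nth u n * cnj (fps_nth v n))"
      unfolding cg by simp
    have nth: "fps_nth (fps_const c * u + v) n = c * fps_nth u n + fps_nth v n" by simp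
    show ?thesis unfolding nth term_id r by (simp add: algebra_simps)
  qed
  have "in_H2w \<omega> (fps_const c * u + v)" using in_H2w_lin[OF u v pos] .
  then have "(H2w_norm \<omega> (fps_const c * u + v))\<^sup>2 = (\<Sum>n. \<omega> n * (cmod (fps_nth (fps_const c * u + v) n))\<^sup>2)"
    using norm_sq pos by blast
  also have "\<dots> = (cmod c)\<^sup>2 * (H2w_norm \<omega> u)\<^sup>2 + (H2w_norm \<omega> v)\<^sup>2 + 2 * Re (c * H2w_inner \<omega> u v)"
    unfolding eq using S by (rule sums_unique[symmetric])
  finally show ?thesis .
qed

lemma inner_cnj:
  assumes u: "in_H2w \<omega> u" and v: "in_H2w \<omega> v" and pos: "\<And>n. \<omega> n > 0"
  shows "H2w_inner \<omega> v u = cnj (H2w_inner \<omega> u v)"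
proof -
  have G: "(\<lambda>n. complex_of_real (\<omega> n) * fps_nth u n * cnj (fps_nth v n)) sums H2w_inner \<omega> u v"
    using inner_summable[OF u v pos] unfolding H2w_inner_def by (simp add: summable_sums)
  then have "(\<lambda>n. complex_of_real (\<omega> n) * fps_nth v n * cnj (fps_nth u n)) sums cnj (H2w_inner \<omega> u v)"
    using sums_cnj[of "\<lambda>n. complex_of_real (\<omega> n) * fps_nth u n * cnj (fps_nth v n)"] by (simp add: mult.commute mult.left_commute)
  then show ?thesis unfolding H2w_inner_def by (rule sums_unique[symmetric])
qed

lemma inner_zero_sym:
  assumes u: "in_H2w \<omega> u" and v: "in_H2w \<omega> v" and pos: "\<And>n. \<omega> n > 0"
    and z: "H2w_inner \<omega> u v = 0"
  shows "H2w_inner \<omega> v u = 0"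
proof -
  have e: "H2w_inner \<omega> v u = cnj (H2w_inner \<omega> u v)" by (rule inner_cnj[OF u v pos])
  show ?thesis by (simp only: e z complex_cnj_zero)
qed

lemma inner_lin:
  assumes u: "in_H2w \<omega> u" and w: "in_H2w \<omega> w" and f: "in_H2w \<omega> f" and pos: "\<And>n. \<omega> n > 0"
  shows "H2w_inner \<omega> (fps_const c * u + w) f = c * H2w_inner \<omega> u f + H2w_inner \<omega> w f"
proof -
  have G1: "(\<lambda>n. complex_of_real (\<omega> n) * fps_nth u n * cnj (fps_nth f n)) sums H2w_inner \<omega> u f"
    using inner_summable[OF u f pos] unfolding H2w_inner_def by (simp add: summable_sums)
  have G2: "(\<lambda>n. complex_of_real (\<omega> n) * fps_nth w n * cnj (fps_nth f n)) sums H2w_inner \<omega> w f"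
    using inner_summable[OF w f pos] unfolding H2w_inner_def by (simp add: summable_sums)
  have "(\<lambda>n. c * (complex_of_real (\<omega> n) * fps_nth u n * cnj (fps_nth f n)) + complex_of_real (\<omega> n) * fps_nth w n * cnj (fps_nth f n)) sums (c * H2w_inner \<omega> u f + H2w_inner \<omega> w f)"
    by (intro sums_add sums_mult G1 G2)
  then have "(\<lambda>n. complex_of_real (\<omega> n) * fps_nth (fps_const c * u + w) n * cnj (fps_nth f n)) sums (c * H2w_inner \<omega> u f + H2w_inner \<omega> w f)"
    by (simp add: algebra_simps)
  then show ?thesis unfolding H2w_inner_def by (rule sums_unique[symmetric])
qed

lemma poly_split: "fps_of_poly (pCons a (q::complex poly)) * f = fps_const a * f + fps_X ^ 1 * (fps_of_poly q * f)"
  by (simp only: fps_of_poly_pCons distrib_right mult.commute[of "fps_of_poly q" fps_X] mult.assoc power_one_right)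

lemma in_H2w_poly:
  assumes "admissible_weight \<omega>" "in_H2w \<omega> f"
  shows "in_H2w \<omega> (fps_of_poly p * f)"
proof (induction p)
  case 0 then show ?case by (simp add: in_H2w_def)
next
  case (pCons a q)
  have pos: "\<And>n. \<omega> n > 0" using assms(1) unfolding admissible_weight_def by auto
  show ?case unfolding poly_split
    by (rule in_H2w_lin[OF assms(2) in_H2w_Xpow[OF assms(1) pCons.IH] pos])
qed

lemma orth_poly:
  assumes adm: "admissible_weight \<omega>" and f: "in_H2w \<omega> f"
    and orth: "\<And>m. m \<ge> 1 \<Longrightarrow> H2w_inner \<omega> (fps_X ^ m * f) f = 0"
  shows "m \<ge> 1 \<Longrightarrow> H2w_inner \<omega> (fps_X ^ m * (fps_of_poly q * f)) f = 0"
proof (induction q arbitrary: m)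
  case 0 then show ?case by (simp add: H2w_inner_def)
next
  case (pCons b r)
  have pos: "\<And>n. \<omega> n > 0" using adm unfolding admissible_weight_def by auto
  have e: "fps_X ^ m * (fps_of_poly (pCons b r) * f) = fps_const b * (fps_X ^ m * f) + fps_X ^ Suc m * (fps_of_poly r * f)"
    by (simp add: fps_of_poly_pCons algebra_simps)
  show ?case unfolding e
    apply (subst inner_lin[OF in_H2w_Xpow[OF adm f] in_H2w_Xpow[OF adm in_H2w_poly[OF adm f]] f pos])
    using orth[OF pCons.prems] pCons.IH[of "Suc m"] by simp
qed

lemma no_lin_bound:
  fixes x K :: real
  assumes "x > 0" "\<And>t. 2 * t * x \<le> K"
  shows False
proof -
  have "2 * ((\<bar>K\<bar> + 1) / x) * x \<le> K" using assms(2) .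
  then have "2 * (\<bar>K\<bar> + 1) \<le> K" using assms(1) by simp
  then show False by (cases "K \<ge> 0") (simp_all add: abs_of_nonneg abs_of_neg)
qed

theorem mainTheorem2:
  fixes \<omega> :: "nat \<Rightarrow> real" and f :: "complex fps"
  assumes "admissible_weight \<omega>"
    and "in_H2w \<omega> f"
  shows "(H2w_inner_fn \<omega> f \<longleftrightarrow>
           (H2w_norm \<omega> f = 1 \<and>
            (\<forall>k::nat. k \<ge> 1 \<longrightarrow>
               ((\<exists>C::real. \<forall>c::complex. (H2w_norm \<omega> (f * g_fn k c))\<^sup>2 \<le> C + (cmod c)\<^sup>2) \<or>
                (\<exists>D::real. \<forall>c::complex. (H2w_norm \<omega> (f * g_fn k c))\<^sup>2 \<ge> D + (cmod c)\<^sup>2)))))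
       \<and> (H2w_inner_fn \<omega> f \<longleftrightarrow>
           (H2w_norm \<omega> f = 1 \<and>
            (\<forall>p::complex poly. cmod (poly p 0) \<le> H2w_norm \<omega> (fps_of_poly p * f))))"
proof -
  note adm = assms(1) and f = assms(2)
  have pos: "\<And>n. \<omega> n > 0" using adm unfolding admissible_weight_def by auto
  have Xf: "\<And>k. in_H2w \<omega> (fps_X ^ k * f)" using in_H2w_Xpow[OF adm f] .
  have gexp: "(H2w_norm \<omega> (f * g_fn k c))\<^sup>2 = (cmod c)\<^sup>2 * (H2w_norm \<omega> f)\<^sup>2 + (H2w_norm \<omega> (fps_X ^ k * f))\<^sup>2
      + 2 * Re (c * cnj (H2w_inner \<omega> (fps_X ^ k * f) f))" for k c
  proof -
    have "f * g_fn k c = fps_const c * f + fps_X ^ k * f" by (simp add: g_fn_def algebra_simps)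
    then show ?thesis using expand[OF f Xf pos, of c k] inner_cnj[OF Xf f pos, of k] by simp
  qed
  have P1: "H2w_inner_fn \<omega> f \<longleftrightarrow>
           (H2w_norm \<omega> f = 1 \<and>
            (\<forall>k::nat. k \<ge> 1 \<longrightarrow>
               ((\<exists>C::real. \<forall>c::complex. (H2w_norm \<omega> (f * g_fn k c))\<^sup>2 \<le> C + (cmod c)\<^sup>2) \<or>
                (\<exists>D::real. \<forall>c::complex. (H2w_norm \<omega> (f * g_fn k c))\<^sup>2 \<ge> D + (cmod c)\<^sup>2))))"
  proof
    assume I: "H2w_inner_fn \<omega> f"
    then have n1: "H2w_norm \<omega> f = 1" and o: "\<And>m. m \<ge> 1 \<Longrightarrow> H2w_inner \<omega> (fps_X ^ m * f) f = 0"
      unfolding H2w_inner_fn_def by auto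
    show "H2w_norm \<omega> f = 1 \<and> (\<forall>k::nat. k \<ge> 1 \<longrightarrow>
               ((\<exists>C::real. \<forall>c::complex. (H2w_norm \<omega> (f * g_fn k c))\<^sup>2 \<le> C + (cmod c)\<^sup>2) \<or>
                (\<exists>D::real. \<forall>c::complex. (H2w_norm \<omega> (f * g_fn k c))\<^sup>2 \<ge> D + (cmod c)\<^sup>2)))"
    proof (intro conjI allI impI disjI1)
      fix k :: nat assume k: "k \<ge> 1"
      show "\<exists>C::real. \<forall>c::complex. (H2w_norm \<omega> (f * g_fn k c))\<^sup>2 \<le> C + (cmod c)\<^sup>2"
      proof (intro exI allI)
        fix c :: complex
        show "(H2w_norm \<omega> (f * g_fn k c))\<^sup>2 \<le> (H2w_norm \<omega> (fps_X ^ k * f))\<^sup>2 + (cmod c)\<^sup>2"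
          unfolding gexp n1 o[OF k] by simp
      qed
    qed (rule n1)
  next
    assume R: "H2w_norm \<omega> f = 1 \<and> (\<forall>k::nat. k \<ge> 1 \<longrightarrow>
               ((\<exists>C::real. \<forall>c::complex. (H2w_norm \<omega> (f * g_fn k c))\<^sup>2 \<le> C + (cmod c)\<^sup>2) \<or>
                (\<exists>D::real. \<forall>c::complex. (H2w_norm \<omega> (f * g_fn k c))\<^sup>2 \<ge> D + (cmod c)\<^sup>2)))"
    then have n1: "H2w_norm \<omega> f = 1" by blast
    have "H2w_inner \<omega> (fps_X ^ m * f) f = 0" if m: "m \<ge> 1" for m
    proof (rule ccontr)
      define a where "a = H2w_inner \<omega> (fps_X ^ m * f) f"
      define A where "A = (H2w_norm \<omega> (fps_X ^ m * f))\<^sup>2"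
      assume "H2w_inner \<omega> (fps_X ^ m * f) f \<noteq> 0"
      then have apos: "(cmod a)\<^sup>2 > 0" unfolding a_def by simp
      have re: "Re (complex_of_real t * a * cnj a) = t * (cmod a)\<^sup>2" for t
        unfolding cmod_power2 by (simp add: power2_eq_square algebra_simps)
      have ge: "(H2w_norm \<omega> (f * g_fn m c))\<^sup>2 = (cmod c)\<^sup>2 + A + 2 * Re (c * cnj a)" for c
        unfolding A_def a_def gexp n1 by simp
      from R m consider (C1) C where "\<And>c. (H2w_norm \<omega> (f * g_fn m c))\<^sup>2 \<le> C + (cmod c)\<^sup>2"
        | (C2) D where "\<And>c. (H2w_norm \<omega> (f * g_fn m c))\<^sup>2 \<ge> D + (cmod c)\<^sup>2" by blast
      then show False
      proof cases
        case C1
        have "2 * t * (cmod a)\<^sup>2 \<le> C - A" for t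
          using C1[of "complex_of_real t * a"] re[of t] unfolding ge by linarith
        then show False using no_lin_bound[OF apos] by blast
      next
        case C2
        have "2 * t * (cmod a)\<^sup>2 \<le> A - D" for t
        proof -
          have r2: "Re (- complex_of_real t * a * cnj a) = - (t * (cmod a)\<^sup>2)"
            unfolding cmod_power2 by (simp add: power2_eq_square algebra_simps)
          show ?thesis using C2[of "- complex_of_real t * a"] r2 unfolding ge by linarith
        qed
        then show False using no_lin_bound[OF apos] by blast
      qed
    qed
    then show "H2w_inner_fn \<omega> f" unfolding H2w_inner_fn_def using f n1 by auto
  qed
  have P2: "H2w_inner_fn \<omega> f \<longleftrightarrow>
           (H2w_norm \<omega> f = 1 \<and>
            (\<forall>p::complex poly. cmod (poly p 0) \<le> H2w_norm \<omega> (fps_of_poly p * f)))"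
  proof
    assume I: "H2w_inner_fn \<omega> f"
    then have n1: "H2w_norm \<omega> f = 1" and o: "\<And>m. m \<ge> 1 \<Longrightarrow> H2w_inner \<omega> (fps_X ^ m * f) f = 0"
      unfolding H2w_inner_fn_def by auto
    have "cmod (poly p 0) \<le> H2w_norm \<omega> (fps_of_poly p * f)" for p
    proof -
      obtain a q where p: "p = pCons a q" by (rule pCons_cases)
      define u where "u = fps_X ^ 1 * (fps_of_poly q * f)"
      have pu: "fps_of_poly p * f = fps_const a * f + u" unfolding u_def p by (rule poly_split)
      have uH: "in_H2w \<omega> u" unfolding u_def by (rule in_H2w_Xpow[OF adm in_H2w_poly[OF adm f]])
      have z: "H2w_inner \<omega> u f = 0" unfolding u_def by (rule orth_poly[OF adm f o, of 1 q]) auto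
      have i0: "H2w_inner \<omega> f u = 0" by (rule inner_zero_sym[OF uH f pos z])
      have eq: "(H2w_norm \<omega> (fps_of_poly p * f))\<^sup>2 = (cmod a)\<^sup>2 + (H2w_norm \<omega> u)\<^sup>2"
        unfolding pu expand[OF f uH pos] i0 n1 by simp
      have "(cmod a)\<^sup>2 \<le> (cmod a)\<^sup>2 + (H2w_norm \<omega> u)\<^sup>2" by (rule le_add_same_cancel1[THEN iffD2, OF zero_le_power2])
      then have "(cmod a)\<^sup>2 \<le> (H2w_norm \<omega> (fps_of_poly p * f))\<^sup>2" unfolding eq .
      moreover have "H2w_norm \<omega> (fps_of_poly p * f) \<ge> 0"
      proof -
        have sm: "summable (\<lambda>n. \<omega> n * (cmod (fps_nth (fps_of_poly p * f) n))\<^sup>2)"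
          using in_H2w_poly[OF adm f, of p] unfolding in_H2w_def .
        have nn: "\<And>n. 0 \<le> \<omega> n * (cmod (fps_nth (fps_of_poly p * f) n))\<^sup>2"
          by (rule mult_nonneg_nonneg[OF less_imp_le[OF pos] zero_le_power2])
        show ?thesis unfolding H2w_norm_def by (rule real_sqrt_ge_zero, rule suminf_nonneg[OF sm nn])
      qed
      ultimately have "cmod a \<le> H2w_norm \<omega> (fps_of_poly p * f)" by (rule power2_le_imp_le)
      moreover have "poly p 0 = a" unfolding p by simp
      ultimately show ?thesis by simp
    qed
    then show "H2w_norm \<omega> f = 1 \<and> (\<forall>p::complex poly. cmod (poly p 0) \<le> H2w_norm \<omega> (fps_of_poly p * f))"
      using n1 by blast
  next
    assume R: "H2w_norm \<omega> f = 1 \<and> (\<forall>p::complex poly. cmod (poly p 0) \<le> H2w_norm \<omega> (fps_of_poly p * f))"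
    then have n1: "H2w_norm \<omega> f = 1" by blast
    have "H2w_inner \<omega> (fps_X ^ m * f) f = 0" if m: "m \<ge> 1" for m
    proof (rule ccontr)
      define a where "a = H2w_inner \<omega> (fps_X ^ m * f) f"
      define B where "B = (H2w_norm \<omega> (fps_X ^ m * f))\<^sup>2"
      have B0: "B \<ge> 0" unfolding B_def by simp
      assume "H2w_inner \<omega> (fps_X ^ m * f) f \<noteq> 0"
      then have apos: "(cmod a)\<^sup>2 > 0" unfolding a_def by simp
      define t :: real where "t = 1 / (B + 1)"
      have tpos: "t > 0" unfolding t_def using B0 by simp
      define c where "c = - complex_of_real t * cnj a"
      have re: "Re (c * a) = - t * (cmod a)\<^sup>2"
        unfolding c_def cmod_power2 by (simp add: power2_eq_square algebra_simps)
      have cm: "(cmod c)\<^sup>2 = t\<^sup>2 * (cmod a)\<^sup>2"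
        unfolding c_def using tpos by (simp add: norm_mult power_mult_distrib)
      define p where "p = monom c m + 1"
      have fp: "fps_of_poly p * f = fps_const c * (fps_X ^ m * f) + f"
      proof -
        have "fps_of_poly p = fps_const c * fps_X ^ m + 1"
          unfolding p_def by (simp add: fps_of_poly_add fps_of_poly_monom)
        then show ?thesis by (simp only: distrib_right mult.assoc mult_1_left)
      qed
      have p0: "poly p 0 = 1" unfolding p_def using m by (simp add: poly_monom)
      have "cmod (poly p 0) \<le> H2w_norm \<omega> (fps_of_poly p * f)" using R by blast
      then have "1 \<le> H2w_norm \<omega> (fps_of_poly p * f)" using p0 by simp
      then have "1 \<le> (H2w_norm \<omega> (fps_of_poly p * f))\<^sup>2" by (rule one_le_power)
      also have "\<dots> = t\<^sup>2 * (cmod a)\<^sup>2 * B + 1 - 2 * t * (cmod a)\<^sup>2"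
        unfolding fp expand[OF Xf f pos] n1 a_def[symmetric] B_def[symmetric] re cm by (simp add: algebra_simps)
      finally have h1: "1 \<le> t\<^sup>2 * (cmod a)\<^sup>2 * B + 1 - 2 * t * (cmod a)\<^sup>2" .
      have h2: "t\<^sup>2 * (cmod a)\<^sup>2 * B = (t * (cmod a)\<^sup>2) * (t * B)" by (simp add: power2_eq_square)
      have h3: "(t * (cmod a)\<^sup>2) * 2 \<le> (t * (cmod a)\<^sup>2) * (t * B)" using h1 h2 by linarith
      have tx: "t * (cmod a)\<^sup>2 > 0" using tpos apos by simp
      have "2 \<le> t * B" using h3 mult_le_cancel_left_pos[OF tx] by blast
      moreover have "t * B < 1" unfolding t_def using B0 by (simp add: field_simps)
      ultimately show False by simp
    qed
    then show "H2w_inner_fn \<omega> f" unfolding H2w_inner_fn_def using f n1 by auto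
  qed
  show ?thesis using P1 P2 by blast
qed

end
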